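(* In the setting described in the context, assume $3$ divides $q^2+q+1$, let $d=3$ and $t=\frac13(q^2+q+1)$. Then $w_u\le2$ for every $u$. Moreover, for $j=0,1,2$, the number $v_j$ of indices $u\in\{0,\dots,t-1\}$ with $w_u=j$ is $v_0=\frac13(q^2-2q+1)$, $v_1=q-1$, $v_2=1$.
   Context: Let $q=p^h$ with $p$ prime, $h\ge1$. Let $\alpha$ be a primitive element of $\mathbb{F}_{q^3}$; the points of $PG(2,q)$ are the 1-dimensional $\mathbb{F}_q$-subspaces of $\mathbb{F}_{q^3}$, and $P_i$ denotes the point represented by $\alpha^i$, so $PG(2,q)=\{P_0,\dots,P_{q^2+q}\}$. Let $\tau:P_i\mapsto P_{ip\bmod(q^2+q+1)}$ (a collineation) and let $\ell_0$ be a line of $PG(2,q)$ fixed by $\tau$. For a positive divisor $t$ of $q^2+q+1$ and $i=0,\dots,t-1$ let $O_i=\{P_u:u\equiv i\pmod t\}$, and for $u=0,\dots,t-1$ let $w_u=|\ell_0\cap O_u|$. *)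

theory Defs
  imports "HOL-Computational_Algebra.Primes"
begin

text \<open>The field F_{q^3} is a finite field type 'a with q^3 elements; its subfield
F_q is the set of fixed points of x \<mapsto> x^q.\<close>

definition subF :: "nat \<Rightarrow> 'a::field set" where
  "subF q = {x. x ^ q = x}"

definition primitive_elem :: "'a::field \<Rightarrow> bool" where
  "primitive_elem \<alpha> \<longleftrightarrow> (\<forall>x::'a. x \<noteq> 0 \<longrightarrow> (\<exists>i::nat. x = \<alpha> ^ i))"

definition pg_point :: "nat \<Rightarrow> 'a::field \<Rightarrow> nat \<Rightarrow> 'a set" where
  "pg_point q \<alpha> i = {c * \<alpha> ^ i | c. c \<in> subF q}"

definition pg_line :: "nat \<Rightarrow> 'a::field set \<Rightarrow> bool" where
  "pg_line q L \<longleftrightarrow> (\<exists>x y. L = {a * x + b * y | a b. a \<in> subF q \<and> b \<in> subF q} \<and>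
      (\<forall>a b. a \<in> subF q \<longrightarrow> b \<in> subF q \<longrightarrow> a * x + b * y = 0 \<longrightarrow> a = 0 \<and> b = 0))"

definition points_on :: "nat \<Rightarrow> 'a::field \<Rightarrow> 'a set \<Rightarrow> 'a set set" where
  "points_on q \<alpha> L = {pg_point q \<alpha> i | i. i < q^2 + q + 1 \<and> pg_point q \<alpha> i \<subseteq> L}"

text \<open>The collineation tau: P_i \<mapsto> P_{ip mod (q^2+q+1)}; L is fixed by tau iff
tau maps the point set of L onto itself.\<close>
definition tau_fixed :: "nat \<Rightarrow> nat \<Rightarrow> 'a::field \<Rightarrow> 'a set \<Rightarrow> bool" where
  "tau_fixed p q \<alpha> L \<longleftrightarrow>
     {pg_point q \<alpha> ((i * p) mod (q^2 + q + 1)) | i. i < q^2 + q + 1 \<and> pg_point q \<alpha> i \<subseteq> L}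
     = points_on q \<alpha> L"

definition orbit_weight :: "nat \<Rightarrow> 'a::field \<Rightarrow> 'a set \<Rightarrow> nat \<Rightarrow> nat \<Rightarrow> nat" where
  "orbit_weight q \<alpha> L t u =
     card {pg_point q \<alpha> v | v. v < q^2 + q + 1 \<and> v mod t = u mod t \<and> pg_point q \<alpha> v \<subseteq> L}"

end

theory Submission imports Defs "HOL-Number_Theory.Residues" begin

lemma card_filter_sum: "finite A \<Longrightarrow> card {x\<in>A. P x} = (\<Sum>x\<in>A. if P x then 1 else 0)"
proof -
  assume "finite A"
  hence "sum (\<lambda>x. 1) {x\<in>A. P x} = (\<Sum>x\<in>A. if P x then 1 else 0)" by (rule sum.inter_filter)
  thus ?thesis by (simp only: card_eq_sum)
qed

lemma sum3: "(\<Sum>v<3*t. f v) = (\<Sum>u<t. f u + f (u+t) + f (u+2*t::nat)::nat)"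
proof -
  have "(\<Sum>v<3*t. f v) = sum f {0..<3*t}" by (simp only: atLeast0LessThan)
  also have "\<dots> = sum f {0..<2*t} + sum f {2*t..<3*t}"
    by (rule sum.atLeastLessThan_concat[symmetric]) auto
  also have "sum f {0..<2*t} = sum f {0..<t} + sum f {t..<2*t}"
    by (rule sum.atLeastLessThan_concat[symmetric]) auto
  also have "sum f {t..<2*t} = sum f {0+t..<t+t}" by (simp only: mult_2 add_0)
  also have "\<dots> = (\<Sum>u=0..<t. f (u+t))" by (rule sum.shift_bounds_nat_ivl)
  also have "sum f {2*t..<3*t} = sum f {0+2*t..<t+2*t}" by (simp only: add_0) (simp add: numeral_3_eq_3 numeral_2_eq_2 algebra_simps)
  also have "\<dots> = (\<Sum>u=0..<t. f (u+2*t))" by (rule sum.shift_bounds_nat_ivl)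
  finally show ?thesis by (simp only: atLeast0LessThan sum.distrib)
qed

definition ind :: "bool \<Rightarrow> nat" where "ind b = (if b then 1 else 0)"

lemma card_ind: "finite A \<Longrightarrow> card {x\<in>A. P x} = (\<Sum>x\<in>A. ind (P x))"
  unfolding ind_def by (rule card_filter_sum)

locale ffs =
  fixes q :: nat and \<alpha> :: "'a::{field,finite}"
  assumes q2: "q \<ge> 2" and card_univ: "card (UNIV::'a set) = q^3"
   and frob: "\<And>x y::'a. (x+y)^q = x^q + y^q"
   and prim: "primitive_elem \<alpha>"
begin

abbreviation "K \<equiv> (subF q :: 'a set)"
definition "n3 = q^3 - 1"
definition "N = q^2 + q + 1"

lemma n3_eq: "n3 = (q - 1) * N"
proof -
  have "q^3 - 1 = (q - 1) * (q^2+q+1)" using q2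
    by (cases q) (auto simp: algebra_simps power2_eq_square power3_eq_cube)
  thus ?thesis by (simp add: n3_def N_def)
qed

lemma n3_pos: "n3 > 0" using q2 by (simp add: n3_eq N_def)
lemma N_pos: "N > 0" by (simp add: N_def)

lemma card_nz: "card (UNIV - {0::'a}) = n3"
  by (simp add: card_Diff_singleton card_univ n3_def)

lemma pow_card_nz:
  assumes "x \<noteq> (0::'a)" shows "x ^ n3 = 1"
proof -
  have "(\<Prod>y\<in>UNIV-{0}. x * y) = x ^ card (UNIV - {0::'a}) * \<Prod>(UNIV-{0::'a})"
    by (simp add: prod.distrib)
  moreover have "(\<Prod>y\<in>UNIV-{0}. x * y) = (\<Prod>y\<in>UNIV-{0::'a}. y)"
    by (rule prod.reindex_bij_witness[of _ "\<lambda>y. y / x" "\<lambda>y. x * y"]) (use assms in auto)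
  moreover have "\<Prod>(UNIV-{0::'a}) \<noteq> 0" by (simp add: prod_zero_iff)
  ultimately show ?thesis using card_nz by simp
qed

lemma card_ge8: "card (UNIV::'a set) \<ge> 8"
proof -
  have "(2::nat)^3 \<le> q^3" using q2 by (rule power_mono) simp
  thus ?thesis using card_univ by simp
qed

lemma alpha_nz: "\<alpha> \<noteq> 0"
proof
  assume a: "\<alpha> = 0"
  have "\<not> UNIV \<subseteq> {0, 1::'a}"
  proof
    assume "UNIV \<subseteq> {0, 1::'a}"
    hence "card (UNIV::'a set) \<le> card {0,1::'a}" by (intro card_mono) auto
    also have "\<dots> \<le> 2" by (rule order_trans[OF card_insert_le_m1]) auto
    finally show False using card_ge8 by simp
  qed
  then obtain x :: 'a where "x \<noteq> 0" "x \<noteq> 1" by auto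
  then obtain i where "x = \<alpha> ^ i" using prim unfolding primitive_elem_def by blast
  thus False using a \<open>x \<noteq> 0\<close> \<open>x \<noteq> 1\<close> by (cases i) auto
qed

lemma alpha_pow_n3: "\<alpha> ^ n3 = 1" using pow_card_nz alpha_nz by blast

lemma alpha_pow_mod: "\<alpha> ^ i = \<alpha> ^ (i mod n3)"
proof -
  have "\<alpha> ^ i = \<alpha> ^ (n3 * (i div n3) + i mod n3)" by (simp only: mult_div_mod_eq)
  also have "\<dots> = \<alpha> ^ (i mod n3)" by (simp only: power_add power_mult alpha_pow_n3 power_one mult_1)
  finally show ?thesis .
qed

lemma alpha_inj: "inj_on (\<lambda>i. \<alpha> ^ i) {..<n3}"
proof (rule ccontr)
  assume "\<not> ?thesis"
  then obtain i j where ij: "i < n3" "j < n3" "i \<noteq> j" "\<alpha>^i = \<alpha>^j" unfolding inj_on_def by blast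
  have "\<exists>d. 0 < d \<and> d < n3 \<and> \<alpha>^d = 1"
  proof (cases "i < j")
    case True
    have "\<alpha>^j = \<alpha>^i * \<alpha>^(j-i)" using True by (simp flip: power_add)
    hence "\<alpha>^(j-i) = 1" using ij alpha_nz by simp
    thus ?thesis using True ij by (intro exI[of _ "j-i"]) auto
  next
    case False
    hence "j < i" using ij by simp
    have "\<alpha>^i = \<alpha>^j * \<alpha>^(i-j)" using \<open>j<i\<close> by (simp flip: power_add)
    hence "\<alpha>^(i-j) = 1" using ij alpha_nz by simp
    thus ?thesis using \<open>j<i\<close> ij by (intro exI[of _ "i-j"]) auto
  qed
  then obtain d where d: "0 < d" "d < n3" "\<alpha>^d = 1" by blast
  have "UNIV - {0} \<subseteq> (\<lambda>k. \<alpha>^k) ` {..<d}"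
  proof
    fix x :: 'a assume "x \<in> UNIV - {0}"
    then obtain k where "x = \<alpha>^k" using prim unfolding primitive_elem_def by blast
    also have "\<alpha>^k = \<alpha>^(d * (k div d) + k mod d)" by (simp only: mult_div_mod_eq)
    also have "\<dots> = \<alpha>^(k mod d)" by (simp only: power_add power_mult d power_one mult_1)
    finally show "x \<in> (\<lambda>k. \<alpha>^k) ` {..<d}" using d by auto
  qed
  hence "card (UNIV - {0::'a}) \<le> card ((\<lambda>k. \<alpha>^k) ` {..<d})" by (intro card_mono) auto
  also have "\<dots> \<le> d" using card_image_le[of "{..<d}" "\<lambda>k. \<alpha>^k"] by simp
  finally show False using card_nz d by simp
qed

lemma alpha_pow_eq: "\<alpha> ^ i = \<alpha> ^ j \<longleftrightarrow> i mod n3 = j mod n3"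
proof
  assume "\<alpha> ^ i = \<alpha> ^ j"
  hence "\<alpha> ^ (i mod n3) = \<alpha> ^ (j mod n3)" by (simp flip: alpha_pow_mod)
  thus "i mod n3 = j mod n3" using alpha_inj n3_pos unfolding inj_on_def by auto
next
  assume "i mod n3 = j mod n3"
  thus "\<alpha> ^ i = \<alpha> ^ j" by (metis alpha_pow_mod)
qed

declare alpha_nz[simp]
lemma alpha_pow_nz[simp]: "\<alpha> ^ i \<noteq> 0" using alpha_nz by simp

lemma nz_alpha_pow: "x \<noteq> 0 \<Longrightarrow> \<exists>i. x = \<alpha> ^ i" using prim unfolding primitive_elem_def by blast

lemma K_iff: "x \<in> K \<longleftrightarrow> x ^ q = x" by (simp add: subF_def)

lemma K0[simp]: "0 \<in> K" using q2 by (simp add: K_iff)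
lemma K1[simp]: "1 \<in> K" by (simp add: K_iff)
lemma K_mult: "x \<in> K \<Longrightarrow> y \<in> K \<Longrightarrow> x * y \<in> K" by (simp add: K_iff power_mult_distrib)
lemma K_add: "x \<in> K \<Longrightarrow> y \<in> K \<Longrightarrow> x + y \<in> K" by (simp add: K_iff frob)
lemma neg_pow: "(-x::'a) ^ q = - (x ^ q)"
proof -
  have "(x + -x)^q = x^q + (-x)^q" by (rule frob)
  moreover have "(x + -x)^q = 0" using q2 by simp
  ultimately show ?thesis by (simp add: eq_neg_iff_add_eq_0 add.commute)
qed
lemma K_uminus: "x \<in> K \<Longrightarrow> -x \<in> K" by (simp add: K_iff neg_pow)
lemma K_diff: "x \<in> K \<Longrightarrow> y \<in> K \<Longrightarrow> x - y \<in> K" using K_add K_uminus by (metis diff_conv_add_uminus)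
lemma K_inverse: "x \<in> K \<Longrightarrow> inverse x \<in> K" by (simp add: K_iff power_inverse)
lemma K_divide: "x \<in> K \<Longrightarrow> y \<in> K \<Longrightarrow> x / y \<in> K" by (simp add: divide_inverse K_mult K_inverse)

lemma alpha_pow_K: "\<alpha> ^ i \<in> K \<longleftrightarrow> N dvd i"
proof -
  have "\<alpha> ^ i \<in> K \<longleftrightarrow> \<alpha> ^ (i*q) = \<alpha> ^ i" by (simp add: K_iff power_mult)
  also have "\<dots> \<longleftrightarrow> (i*q) mod n3 = i mod n3" by (rule alpha_pow_eq)
  also have "\<dots> \<longleftrightarrow> n3 dvd (i*q - i)" using q2 by (intro mod_eq_dvd_iff_nat) simp
  also have "i*q - i = i * (q - 1)" by (simp add: diff_mult_distrib2)
  also have "n3 dvd i * (q - 1) \<longleftrightarrow> N dvd i" using q2 by (simp add: n3_eq mult.commute)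
  finally show ?thesis .
qed

lemma N_dvd_n3: "N dvd n3" by (simp add: n3_eq)

lemma Knz_eq: "K - {0} = (\<lambda>j. \<alpha>^(N*j)) ` {..<q-1}"
proof
  show "K - {0} \<subseteq> (\<lambda>j. \<alpha>^(N*j)) ` {..<q-1}"
  proof
    fix x assume x: "x \<in> K - {0}"
    then obtain i where i: "x = \<alpha>^i" using nz_alpha_pow by blast
    hence "N dvd i" using x alpha_pow_K by auto
    then obtain m where m: "i = N * m" by blast
    have "(N*m) mod n3 = (N * (m mod (q-1))) mod n3"
      by (simp add: n3_eq mult.commute[of "q-1"] mod_mult_mult1)
    hence "\<alpha>^(N*m) = \<alpha>^(N * (m mod (q-1)))" by (simp add: alpha_pow_eq)
    moreover have "m mod (q-1) < q-1" using q2 by simp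
    ultimately show "x \<in> (\<lambda>j. \<alpha>^(N*j)) ` {..<q-1}" using i m by blast
  qed
next
  show "(\<lambda>j. \<alpha>^(N*j)) ` {..<q-1} \<subseteq> K - {0}" by (auto simp: alpha_pow_K)
qed

lemma card_K: "card K = q"
proof -
  have inj: "inj_on (\<lambda>j. \<alpha>^(N*j)) {..<q-1}"
  proof (rule inj_onI)
    fix a b assume ab: "a \<in> {..<q-1}" "b \<in> {..<q-1}" "\<alpha>^(N*a) = \<alpha>^(N*b)"
    have "N*a < n3" "N*b < n3" using ab(1,2) N_pos by (auto simp: n3_eq mult.commute)
    hence "N*a = N*b" using alpha_inj ab(3) unfolding inj_on_def by blast
    thus "a = b" using N_pos by simp
  qed
  have "card (K - {0}) = q - 1" using card_image[OF inj] Knz_eq by simp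
  moreover have "finite K" by simp
  moreover have "card (K - {0}) = card K - 1" by (simp add: card_Diff_singleton)
  moreover have "card K > 0" using \<open>finite K\<close> K0 card_gt_0_iff by blast
  ultimately show ?thesis using q2 by linarith
qed

lemma decomp: "x \<noteq> 0 \<Longrightarrow> \<exists>c v. c \<in> K \<and> c \<noteq> 0 \<and> v < N \<and> x = c * \<alpha>^v"
proof -
  assume "x \<noteq> 0"
  then obtain i where i: "x = \<alpha>^i" using nz_alpha_pow by blast
  have "x = \<alpha>^(N*(i div N)) * \<alpha>^(i mod N)" unfolding i by (simp flip: power_add)
  moreover have "\<alpha>^(N*(i div N)) \<in> K" by (simp add: alpha_pow_K)
  ultimately show ?thesis using N_pos by (intro exI[of _ "\<alpha>^(N*(i div N))"] exI[of _ "i mod N"]) auto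
qed

lemma Knz_pow: "c \<in> K \<Longrightarrow> c \<noteq> 0 \<Longrightarrow> \<exists>a. c = \<alpha>^(N*a)"
  using nz_alpha_pow alpha_pow_K by (metis dvdE)

lemma decomp_unique:
  assumes "c \<in> K" "c \<noteq> 0" "c' \<in> K" "c' \<noteq> 0" "v < N" "v' < N" "c * \<alpha>^v = c' * \<alpha>^v'"
  shows "v = v'"
proof -
  obtain a b where ab: "c = \<alpha>^(N*a)" "c' = \<alpha>^(N*b)" using Knz_pow assms by metis
  have "\<alpha>^(N*a+v) = \<alpha>^(N*b+v')" using assms(7) ab by (simp add: power_add)
  hence "(N*a+v) mod n3 = (N*b+v') mod n3" by (simp add: alpha_pow_eq)
  hence "(N*a+v) mod n3 mod N = (N*b+v') mod n3 mod N" by simp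
  hence "(N*a+v) mod N = (N*b+v') mod N" using N_dvd_n3 by (simp add: mod_mod_cancel)
  thus ?thesis using assms(5,6) by simp
qed

definition cone :: "'a set \<Rightarrow> bool" where "cone X \<longleftrightarrow> (\<forall>c\<in>K. \<forall>x\<in>X. c * x \<in> X)"
definition idx :: "'a set \<Rightarrow> nat set" where "idx X = {v. v < N \<and> \<alpha>^v \<in> X}"

lemma card_cone:
  assumes "cone X" shows "card (X - {0}) = (q - 1) * card (idx X)"
proof -
  have eq: "X - {0} = (\<lambda>(c,v). c * \<alpha>^v) ` ((K - {0}) \<times> idx X)"
  proof
    show "X - {0} \<subseteq> (\<lambda>(c,v). c * \<alpha>^v) ` ((K - {0}) \<times> idx X)"
    proof
      fix x assume x: "x \<in> X - {0}"
      then obtain c v where cv: "c \<in> K" "c \<noteq> 0" "v < N" "x = c * \<alpha>^v" using decomp by blast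
      have "inverse c * x \<in> X" using assms cv x K_inverse unfolding cone_def by blast
      hence "\<alpha>^v \<in> X" using cv by (simp add: mult.assoc[symmetric])
      thus "x \<in> (\<lambda>(c,v). c * \<alpha>^v) ` ((K - {0}) \<times> idx X)" using cv unfolding idx_def by force
    qed
  next
    show "(\<lambda>(c,v). c * \<alpha>^v) ` ((K - {0}) \<times> idx X) \<subseteq> X - {0}"
      using assms unfolding cone_def idx_def by auto
  qed
  have inj: "inj_on (\<lambda>(c,v). c * \<alpha>^v) ((K - {0}) \<times> idx X)"
  proof (rule inj_onI)
    fix a b assume a: "a \<in> (K - {0}) \<times> idx X" and b: "b \<in> (K - {0}) \<times> idx X"
      and e: "(\<lambda>(c,v). c * \<alpha>^v) a = (\<lambda>(c,v). c * \<alpha>^v) b"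
    obtain c v c' v' where ab: "a = (c,v)" "b = (c',v')" by force
    have h: "c \<in> K" "c \<noteq> 0" "v < N" "c' \<in> K" "c' \<noteq> 0" "v' < N" "c * \<alpha>^v = c' * \<alpha>^v'"
      using a b e ab unfolding idx_def by auto
    hence "v = v'" using decomp_unique by blast
    thus "a = b" using h(7) ab by simp
  qed
  have "card (X - {0}) = card (K - {0}) * card (idx X)"
    unfolding eq card_image[OF inj] card_cartesian_product ..
  also have "card (K - {0}) = q - 1" using card_K by (simp add: card_Diff_singleton)
  finally show ?thesis .
qed

definition span2 :: "'a \<Rightarrow> 'a \<Rightarrow> 'a set" where
  "span2 x y = {a * x + b * y | a b. a \<in> K \<and> b \<in> K}"
definition indep2 :: "'a \<Rightarrow> 'a \<Rightarrow> bool" where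
  "indep2 x y \<longleftrightarrow> (\<forall>a b. a \<in> K \<longrightarrow> b \<in> K \<longrightarrow> a * x + b * y = 0 \<longrightarrow> a = 0 \<and> b = 0)"

lemma line_iff: "pg_line q L \<longleftrightarrow> (\<exists>x y. L = span2 x y \<and> indep2 x y)"
  unfolding pg_line_def span2_def indep2_def by simp

lemma span2_cone: "cone (span2 x y)"
  unfolding cone_def span2_def
proof (intro ballI)
  fix c z assume "c \<in> K" "z \<in> {a * x + b * y | a b. a \<in> K \<and> b \<in> K}"
  then obtain a b where "a \<in> K" "b \<in> K" "z = a * x + b * y" "c \<in> K" by blast
  thus "c * z \<in> {a * x + b * y | a b. a \<in> K \<and> b \<in> K}"
    by (intro CollectI exI[of _ "c*a"] exI[of _ "c*b"]) (auto simp: K_mult algebra_simps)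
qed

lemma span2_add: "z \<in> span2 x y \<Longrightarrow> z' \<in> span2 x y \<Longrightarrow> z + z' \<in> span2 x y"
proof -
  assume "z \<in> span2 x y" "z' \<in> span2 x y"
  then obtain a b a' b' where "a \<in> K" "b \<in> K" "z = a * x + b * y" "a' \<in> K" "b' \<in> K" "z' = a' * x + b' * y"
    unfolding span2_def by blast
  thus ?thesis unfolding span2_def
    by (intro CollectI exI[of _ "a+a'"] exI[of _ "b+b'"]) (auto simp: K_add algebra_simps)
qed

lemma span2_card: assumes "indep2 x y" shows "card (span2 x y) = q^2"
proof -
  have eq: "span2 x y = (\<lambda>(a,b). a * x + b * y) ` (K \<times> K)" unfolding span2_def by auto
  have inj: "inj_on (\<lambda>(a,b). a * x + b * y) (K \<times> K)"
  proof (rule inj_onI)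
    fix u w assume u: "u \<in> K \<times> K" and w: "w \<in> K \<times> K"
      and e: "(\<lambda>(a,b). a * x + b * y) u = (\<lambda>(a,b). a * x + b * y) w"
    obtain a b a' b' where ab: "u = (a,b)" "w = (a',b')" by force
    have "(a - a') * x + (b - b') * y = 0" using e ab by (simp add: algebra_simps)
    moreover have "a - a' \<in> K" "b - b' \<in> K" using u w ab K_diff by auto
    ultimately have "a - a' = 0 \<and> b - b' = 0" using assms unfolding indep2_def by blast
    thus "u = w" using ab by simp
  qed
  show ?thesis unfolding eq card_image[OF inj] card_cartesian_product card_K by (simp add: power2_eq_square)
qed

lemma span2_sub:
  assumes "cone Z" "\<And>z z'. z \<in> Z \<Longrightarrow> z' \<in> Z \<Longrightarrow> z + z' \<in> Z" "u \<in> Z" "w \<in> Z"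
  shows "span2 u w \<subseteq> Z"
  using assms unfolding span2_def cone_def by blast

lemma card_idx_line:
  assumes "indep2 x y" shows "card (idx (span2 x y)) = q + 1"
proof -
  have "(q - 1) * card (idx (span2 x y)) = card (span2 x y - {0})" using card_cone span2_cone by simp
  also have "\<dots> = q^2 - 1" using span2_card[OF assms] unfolding span2_def
    by (subst card_Diff_singleton) (force intro!: exI[of _ 0])+
  also have "q^2 - 1 = (q - 1) * (q + 1)" using q2 by (simp add: power2_eq_square algebra_simps)
  finally have e: "(q - 1) * card (idx (span2 x y)) = (q - 1) * (q + 1)" .
  have "q - 1 \<noteq> 0" using q2 by simp
  thus ?thesis using e by (meson mult_left_cancel)
qed

end

locale ffs3 = ffs +
  assumes three: "3 dvd N"
begin

definition "t = N div 3"
definition "\<beta> = \<alpha> ^ t"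

lemma N_eq: "N = 3 * t" using three by (simp add: t_def)
lemma t_pos: "t > 0" using N_eq N_pos by simp

lemma q_mod3: "q mod 3 = 1"
proof -
  have h: "(q*q+q+1) mod 3 = 0" using three by (simp add: N_def power2_eq_square)
  define m r where "m = q div 3" and "r = q mod 3"
  have q: "q = 3*m + r" by (simp add: m_def r_def)
  have "q*q+q+1 = 3*(3*m*m + 2*m*r + m) + (r*r + r + 1)" unfolding q by (simp add: algebra_simps)
  hence "(r*r+r+1) mod 3 = 0" using h by presburger
  moreover have "r < 3" by (simp add: r_def)
  ultimately have "r = 1" by (cases r; cases "r - 1"; auto)
  thus ?thesis by (simp add: r_def)
qed

lemma beta_notK: "\<beta> \<notin> K"
proof
  assume "\<beta> \<in> K"
  hence "N dvd t" by (simp add: \<beta>_def alpha_pow_K)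
  thus False using t_pos N_eq by (simp add: dvd_imp_le nat_dvd_not_less)
qed

lemma beta_pow_eq: assumes "a \<le> b" shows "\<beta>^a = \<beta>^b \<longleftrightarrow> (3*(q-1)) dvd (b-a)"
proof -
  have "\<beta>^a = \<beta>^b \<longleftrightarrow> \<alpha>^(t*a) = \<alpha>^(t*b)" by (simp add: \<beta>_def power_mult)
  also have "\<dots> \<longleftrightarrow> (t*a) mod n3 = (t*b) mod n3" by (rule alpha_pow_eq)
  also have "\<dots> \<longleftrightarrow> n3 dvd (t*b - t*a)" using mod_eq_dvd_iff_nat[of "t*a" "t*b" n3] assms by auto
  also have "t*b - t*a = t*(b-a)" by (simp add: diff_mult_distrib2)
  also have "n3 = t * (3*(q-1))" by (simp add: n3_eq N_eq)
  also have "t * (3*(q-1)) dvd t*(b-a) \<longleftrightarrow> (3*(q-1)) dvd (b-a)" using t_pos by simp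
  finally show ?thesis .
qed

lemma beta_q: "\<beta>^q \<noteq> \<beta>"
proof -
  have "\<not> (3*(q-1)) dvd (q - 1)" using q2 by (simp add: nat_dvd_not_less)
  thus ?thesis using beta_pow_eq[of 1 q] q2 by auto
qed

lemma beta_q2: "\<beta>^(q^2) \<noteq> \<beta>"
proof -
  have "q^2 - 1 = (q-1)*(q+1)" using q2 by (simp add: power2_eq_square algebra_simps)
  moreover have "\<not> 3 dvd (q+1)" using q_mod3 by presburger
  moreover have "(q-1)*3 dvd (q-1)*(q+1) \<longleftrightarrow> 3 dvd (q+1)" using q2 by (intro nat_mult_dvd_cancel1) simp
  ultimately have "\<not> (3*(q-1)) dvd (q^2 - 1)" by (simp only: mult.commute[of 3]) simp
  moreover have "1 \<le> q^2" using q2 by simp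
  ultimately show ?thesis using beta_pow_eq[of 1 "q^2"] by auto
qed

lemma beta_q2q: "\<beta>^(q^2) \<noteq> \<beta>^q"
proof -
  have "q^2 - q = (q-1)*q" using q2 by (simp add: power2_eq_square algebra_simps)
  moreover have "\<not> 3 dvd q" using q_mod3 by presburger
  moreover have "(q-1)*3 dvd (q-1)*q \<longleftrightarrow> 3 dvd q" using q2 by (intro nat_mult_dvd_cancel1) simp
  ultimately have "\<not> (3*(q-1)) dvd (q^2 - q)" by (simp only: mult.commute[of 3]) simp
  moreover have "q \<le> q^2" using q2 by (simp add: power2_eq_square)
  ultimately show ?thesis using beta_pow_eq[of q "q^2"] by auto
qed

lemma root_frob:
  assumes "A \<in> K" "B \<in> K" "z^2 = A*z + B" shows "(z^q)^2 = A*z^q + B"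
proof -
  have "(z^q)^2 = (z^2)^q" by (simp flip: power_mult) (simp add: mult.commute)
  also have "\<dots> = (A*z)^q + B^q" using assms(3) frob by simp
  also have "\<dots> = A * z^q + B" using assms(1,2) by (simp add: power_mult_distrib K_iff)
  finally show ?thesis .
qed

lemma three_roots:
  fixes r1 r2 r3 A B :: 'a
  assumes "r1^2 = A*r1 + B" "r2^2 = A*r2 + B" "r3^2 = A*r3 + B"
    "r1 \<noteq> r2" "r1 \<noteq> r3" "r2 \<noteq> r3"
  shows False
proof -
  have "(r1 - r2) * (r1 + r2 - A) = 0" using assms(1,2) by (simp add: algebra_simps power2_eq_square)
  hence a: "r1 + r2 = A" using assms(4) by simp
  have "(r1 - r3) * (r1 + r3 - A) = 0" using assms(1,3) by (simp add: algebra_simps power2_eq_square)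
  hence "r1 + r3 = A" using assms(5) by simp
  thus False using a assms(6) by (metis add_left_cancel)
qed

lemma indep3:
  assumes "a \<in> K" "b \<in> K" "c \<in> K" "a + b*\<beta> + c*\<beta>^2 = 0" shows "a = 0 \<and> b = 0 \<and> c = 0"
proof (cases "c = 0")
  case True
  show ?thesis
  proof (cases "b = 0")
    case True thus ?thesis using \<open>c = 0\<close> assms(4) by simp
  next
    case False
    have "\<beta> = - a / b" using assms(4) \<open>c = 0\<close> False by (simp add: field_simps add_eq_0_iff)
    hence "\<beta> \<in> K" using assms K_divide K_uminus by simp
    thus ?thesis using beta_notK by simp
  qed
next
  case False
  define A B where "A = - b / c" and "B = - a / c"
  have AB: "A \<in> K" "B \<in> K" unfolding A_def B_def using assms K_divide K_uminus by auto
  have r1: "\<beta>^2 = A*\<beta> + B" using assms(4) False unfolding A_def B_def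
    by (simp add: field_simps add_eq_0_iff)
  have r2: "(\<beta>^q)^2 = A*\<beta>^q + B" by (rule root_frob[OF AB r1])
  have r3: "((\<beta>^q)^q)^2 = A*(\<beta>^q)^q + B" by (rule root_frob[OF AB r2])
  have "(\<beta>^q)^q = \<beta>^(q^2)" by (simp add: power2_eq_square power_mult)
  hence False using three_roots[OF r1 r2 r3] beta_q beta_q2 beta_q2q by metis
  thus ?thesis ..
qed

lemma span2_neg: "z \<in> span2 x y \<Longrightarrow> -z \<in> span2 x y"
  using span2_cone[of x y] K_uminus[OF K1] unfolding cone_def by (metis mult_minus1)

lemma span2_diff: "z \<in> span2 x y \<Longrightarrow> z' \<in> span2 x y \<Longrightarrow> z - z' \<in> span2 x y"
  using span2_add span2_neg by (metis diff_conv_add_uminus)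

lemma span2_0: "0 \<in> span2 x y"
  unfolding span2_def by (force intro!: exI[of _ 0])

lemma beta_nz[simp]: "\<beta> \<noteq> 0" by (simp add: \<beta>_def)

context
  fixes x y :: 'a
  assumes ind: "indep2 x y"
begin

abbreviation "LL \<equiv> span2 x y"
definition "MM = {z. \<beta> * z \<in> LL}"

lemma card_LL: "card LL = q^2" using span2_card[OF ind] .

lemma no_full:
  assumes "z \<noteq> 0" "z \<in> LL" "\<beta> * z \<in> LL" "\<beta>^2 * z \<in> LL"
  shows False
proof -
  define f where "f = (\<lambda>(a,b,c). a * z + b * (\<beta> * z) + c * (\<beta>^2 * z))"
  have sub: "f ` (K \<times> K \<times> K) \<subseteq> LL"
  proof clarify
    fix a b c assume "a \<in> K" "b \<in> K" "c \<in> K"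
    hence "a * z \<in> LL" "b * (\<beta> * z) \<in> LL" "c * (\<beta>^2 * z) \<in> LL"
      using assms span2_cone[of x y] unfolding cone_def by auto
    thus "f (a,b,c) \<in> LL" unfolding f_def using span2_add by simp
  qed
  have inj: "inj_on f (K \<times> K \<times> K)"
  proof (rule inj_onI)
    fix u w assume u: "u \<in> K \<times> K \<times> K" and w: "w \<in> K \<times> K \<times> K" and e: "f u = f w"
    obtain a b c a' b' c' where ab: "u = (a,b,c)" "w = (a',b',c')" by (metis prod_cases3)
    have "z * ((a - a') + (b - b') * \<beta> + (c - c') * \<beta>^2) = 0"
      using e ab unfolding f_def by (simp add: algebra_simps)
    hence "(a - a') + (b - b') * \<beta> + (c - c') * \<beta>^2 = 0" using assms(1) by simp
    moreover have "a - a' \<in> K" "b - b' \<in> K" "c - c' \<in> K" using u w ab K_diff by auto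
    ultimately have "a - a' = 0 \<and> b - b' = 0 \<and> c - c' = 0" using indep3 by blast
    thus "u = w" using ab by simp
  qed
  have "card (f ` (K \<times> K \<times> K)) \<le> card LL" using sub by (intro card_mono) auto
  hence "q^3 \<le> q^2" using card_image[OF inj] card_LL by (simp add: card_cartesian_product card_K power3_eq_cube power2_eq_square)
  moreover have "q^2 < q^3" using q2 by (simp add: power_strict_increasing)
  ultimately show False by simp
qed

lemma MM_cone: "cone MM"
  using span2_cone[of x y] unfolding cone_def MM_def by (auto simp: mult.left_commute)

lemma MM_add: "z \<in> MM \<Longrightarrow> z' \<in> MM \<Longrightarrow> z + z' \<in> MM"
  unfolding MM_def using span2_add by (simp add: distrib_left)

lemma MM_diff: "z \<in> MM \<Longrightarrow> z' \<in> MM \<Longrightarrow> z - z' \<in> MM"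
  unfolding MM_def using span2_diff by (simp add: right_diff_distrib)

lemma card_MM: "card MM = q^2"
proof -
  have "MM = (\<lambda>z. z / \<beta>) ` LL"
  proof
    show "MM \<subseteq> (\<lambda>z. z / \<beta>) ` LL" unfolding MM_def
    proof
      fix z assume "z \<in> {z. \<beta> * z \<in> LL}"
      hence "\<beta> * z \<in> LL" by simp
      moreover have "z = (\<beta> * z) / \<beta>" by simp
      ultimately show "z \<in> (\<lambda>z. z / \<beta>) ` LL" by blast
    qed
  qed (auto simp: MM_def)
  moreover have "inj_on (\<lambda>z. z / \<beta>) LL" by (rule inj_onI) simp
  ultimately show ?thesis using card_image card_LL by metis
qed

lemma inter_nontriv: "\<exists>u. u \<noteq> 0 \<and> u \<in> LL \<and> u \<in> MM"
proof (rule ccontr)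
  assume h: "\<not> ?thesis"
  have inj: "inj_on (\<lambda>(l,m). l + m) (LL \<times> MM)"
  proof (rule inj_onI)
    fix u w assume u: "u \<in> LL \<times> MM" and w: "w \<in> LL \<times> MM" and e: "(\<lambda>(l,m). l + m) u = (\<lambda>(l,m). l + m) w"
    obtain l m l' m' where ab: "u = (l,m)" "w = (l',m')" by force
    have "l - l' = m' - m" using e ab by (simp add: algebra_simps)
    moreover have "l - l' \<in> LL" using u w ab span2_diff by auto
    moreover have "m' - m \<in> MM" using u w ab MM_diff by auto
    ultimately have "l - l' = 0" using h by metis
    moreover have "m' - m = 0" using \<open>l - l' = m' - m\<close> calculation by simp
    ultimately show "u = w" using ab by simp
  qed
  have "card ((\<lambda>(l,m). l + m) ` (LL \<times> MM)) \<le> card (UNIV :: 'a set)" by (intro card_mono) auto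
  hence "q^2 * q^2 \<le> q^3" using card_image[OF inj] by (simp add: card_cartesian_product card_LL card_MM card_univ)
  moreover have "q^3 < q^2 * q^2" using q2 by (simp flip: power_add add: power_strict_increasing)
  ultimately show False by simp
qed

lemma card_idx_inter: "card (idx (LL \<inter> MM)) = 1"
proof -
  obtain u where u: "u \<noteq> 0" "u \<in> LL" "u \<in> MM" using inter_nontriv by blast
  have I_cone: "cone (LL \<inter> MM)" using span2_cone[of x y] MM_cone unfolding cone_def by blast
  have eq: "LL \<inter> MM = (\<lambda>c. c * u) ` K"
  proof
    show "(\<lambda>c. c * u) ` K \<subseteq> LL \<inter> MM" using I_cone u unfolding cone_def by blast
    show "LL \<inter> MM \<subseteq> (\<lambda>c. c * u) ` K"
    proof
      fix w assume w: "w \<in> LL \<inter> MM"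
      show "w \<in> (\<lambda>c. c * u) ` K"
      proof (rule ccontr)
        assume nw: "w \<notin> (\<lambda>c. c * u) ` K"
        have "indep2 u w" unfolding indep2_def
        proof (intro allI impI)
          fix a b assume ab: "a \<in> K" "b \<in> K" "a * u + b * w = 0"
          show "a = 0 \<and> b = 0"
          proof (cases "b = 0")
            case True thus ?thesis using ab u by simp
          next
            case False
            hence "w = (- a / b) * u" using ab by (simp add: field_simps add_eq_0_iff)
            moreover have "- a / b \<in> K" using ab K_divide K_uminus by simp
            ultimately show ?thesis using nw by blast
          qed
        qed
        have sub: "span2 u w \<subseteq> LL \<inter> MM"
          by (rule span2_sub[OF I_cone]) (use span2_add MM_add u w in auto)
        have "span2 u w = LL"
          using sub card_LL span2_card[OF \<open>indep2 u w\<close>] by (intro card_subset_eq) auto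
        hence "LL \<subseteq> MM" using sub by auto
        hence "\<beta> * u \<in> LL" "\<beta> * (\<beta> * u) \<in> LL" using u unfolding MM_def by auto
        thus False using no_full[of u] u by (simp add: power2_eq_square mult.assoc)
      qed
    qed
  qed
  have "inj_on (\<lambda>c. c * u) K" using u by (intro inj_onI) simp
  hence "card (LL \<inter> MM) = q" using eq card_image card_K by metis
  hence "card (LL \<inter> MM - {0}) = q - 1" using span2_0 MM_cone
    by (subst card_Diff_singleton) (auto simp: MM_def span2_0)
  hence "(q - 1) * card (idx (LL \<inter> MM)) = (q - 1) * 1" using card_cone[OF I_cone] by simp
  moreover have "q - 1 \<noteq> 0" using q2 by simp
  ultimately show ?thesis by (meson mult_left_cancel)
qed

lemma cone_mod: assumes "cone X" shows "\<alpha>^i \<in> X \<longleftrightarrow> \<alpha>^(i mod N) \<in> X"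
proof -
  define c where "c = \<alpha>^(N*(i div N))"
  have c: "c \<in> K" "c \<noteq> 0" unfolding c_def by (auto simp: alpha_pow_K)
  have e: "\<alpha>^i = c * \<alpha>^(i mod N)" unfolding c_def by (simp flip: power_add)
  show ?thesis
  proof
    assume "\<alpha>^i \<in> X"
    hence "inverse c * \<alpha>^i \<in> X" using assms c K_inverse unfolding cone_def by blast
    thus "\<alpha>^(i mod N) \<in> X" using e c by (simp add: mult.assoc[symmetric])
  next
    assume "\<alpha>^(i mod N) \<in> X"
    thus "\<alpha>^i \<in> X" using assms c e unfolding cone_def by simp
  qed
qed

abbreviation "SS \<equiv> idx LL"
abbreviation "DD \<equiv> idx (LL \<inter> MM)"

lemma D_iff: assumes "v < N" shows "v \<in> DD \<longleftrightarrow> v \<in> SS \<and> (v + t) mod N \<in> SS"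
proof -
  have "v \<in> DD \<longleftrightarrow> \<alpha>^v \<in> LL \<and> \<alpha>^(v+t) \<in> LL" using assms unfolding idx_def MM_def
    by (auto simp: \<beta>_def power_add mult.commute)
  also have "\<alpha>^(v+t) \<in> LL \<longleftrightarrow> \<alpha>^((v+t) mod N) \<in> LL" by (rule cone_mod[OF span2_cone])
  finally show ?thesis using assms N_pos unfolding idx_def by auto
qed

lemma noS3: assumes "u < t" shows "\<not> (u \<in> SS \<and> u+t \<in> SS \<and> u+2*t \<in> SS)"
proof
  assume h: "u \<in> SS \<and> u+t \<in> SS \<and> u+2*t \<in> SS"
  have "\<alpha>^u \<in> LL" "\<beta> * \<alpha>^u \<in> LL" "\<beta>^2 * \<alpha>^u \<in> LL" using h unfolding idx_def
    by (auto simp: \<beta>_def power_add mult.commute power_mult[symmetric] mult_2_right)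
  thus False using no_full[of "\<alpha>^u"] by simp
qed

definition "wt u = ind (u \<in> SS) + ind (u+t \<in> SS) + ind (u+2*t \<in> SS)"

lemma wt_le: "u < t \<Longrightarrow> wt u \<le> 2"
  using noS3[of u] unfolding wt_def ind_def by auto

lemma card_SS_sum: "card X = (\<Sum>v<N. ind (v \<in> X))" if "X \<subseteq> {..<N}" for X
proof -
  have "card {v\<in>{..<N}. v\<in>X} = (\<Sum>v\<in>{..<N}. ind (v\<in>X))" by (rule card_ind) simp
  moreover have "{v\<in>{..<N}. v\<in>X} = X" using that by auto
  ultimately show ?thesis by simp
qed

lemma idx_sub: "idx X \<subseteq> {..<N}" unfolding idx_def by auto

lemma sum_wt: "(\<Sum>u<t. wt u) = q + 1"
proof -
  have "card SS = (\<Sum>v<N. ind (v \<in> SS))" by (rule card_SS_sum[OF idx_sub])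
  also have "\<dots> = (\<Sum>v<3*t. ind (v \<in> SS))" by (simp only: N_eq)
  also have "\<dots> = (\<Sum>u<t. wt u)" unfolding wt_def by (rule sum3)
  finally show ?thesis using card_idx_line[OF ind] by simp
qed

lemma sum_wt2: "(\<Sum>u<t. ind (wt u = 2)) = 1"
proof -
  have "card DD = (\<Sum>v<N. ind (v \<in> DD))" by (rule card_SS_sum[OF idx_sub])
  also have "\<dots> = (\<Sum>v<3*t. ind (v \<in> DD))" by (simp only: N_eq)
  also have "\<dots> = (\<Sum>u<t. ind (u \<in> DD) + ind (u+t \<in> DD) + ind (u+2*t \<in> DD))" by (rule sum3)
  also have "\<dots> = (\<Sum>u<t. ind (wt u = 2))"
  proof (rule sum.cong[OF refl])
    fix u assume "u \<in> {..<t}"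
    hence u: "u < t" by simp
    have m1: "(u + t) mod N = u + t" using u N_eq by simp
    have m2: "(u + t + t) mod N = u + 2*t" using u N_eq by simp
    have "u + 2*t + t = u + N" using N_eq by simp
    hence m3: "(u + 2*t + t) mod N = u" using u N_eq by simp
    have "u \<in> DD \<longleftrightarrow> u \<in> SS \<and> u + t \<in> SS" using D_iff[of u] u N_eq m1 by simp
    moreover have "u + t \<in> DD \<longleftrightarrow> u + t \<in> SS \<and> u + 2*t \<in> SS" using D_iff[of "u+t"] u N_eq m2 by (simp add: mult_2 add.assoc)
    moreover have "u + 2*t \<in> DD \<longleftrightarrow> u + 2*t \<in> SS \<and> u \<in> SS" using D_iff[of "u+2*t"] u N_eq m3 by simp
    ultimately show "ind (u \<in> DD) + ind (u+t \<in> DD) + ind (u+2*t \<in> DD) = ind (wt u = 2)"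
      using noS3[OF u] by (cases "u\<in>SS"; cases "u+t\<in>SS"; cases "u+2*t\<in>SS") (simp_all add: wt_def ind_def)
  qed
  finally show ?thesis using card_idx_inter by simp
qed

lemma card_lt: "card {u. u < t \<and> P u} = (\<Sum>u<t. ind (P u))"
proof -
  have "{u. u < t \<and> P u} = {u\<in>{..<t}. P u}" by auto
  thus ?thesis using card_ind[of "{..<t}" P] by simp
qed

lemma counts:
  "card {u. u < t \<and> wt u = 2} = 1"
  "card {u. u < t \<and> wt u = 1} = q - 1"
  "card {u. u < t \<and> wt u = 0} + q = t"
proof -
  show c2: "card {u. u < t \<and> wt u = 2} = 1" using card_lt sum_wt2 by simp
  have "(\<Sum>u<t. wt u) = (\<Sum>u<t. ind (wt u = 1) + 2 * ind (wt u = 2))"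
    by (rule sum.cong[OF refl]) (use wt_le in \<open>force simp: ind_def\<close>)
  also have "\<dots> = card {u. u < t \<and> wt u = 1} + 2 * card {u. u < t \<and> wt u = 2}"
    by (simp add: card_lt sum.distrib sum_distrib_left)
  finally have e1: "q + 1 = card {u. u < t \<and> wt u = 1} + 2" using sum_wt c2 by simp
  thus c1: "card {u. u < t \<and> wt u = 1} = q - 1" by simp
  have "t = (\<Sum>u<t. ind (wt u = 0) + ind (wt u = 1) + ind (wt u = 2))"
  proof -
    have "(\<Sum>u<t. ind (wt u = 0) + ind (wt u = 1) + ind (wt u = 2)) = (\<Sum>u<t. (1::nat))"
      by (rule sum.cong[OF refl]) (use wt_le in \<open>force simp: ind_def\<close>)
    thus ?thesis by simp
  qed
  also have "\<dots> = card {u. u < t \<and> wt u = 0} + card {u. u < t \<and> wt u = 1} + card {u. u < t \<and> wt u = 2}"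
    by (simp add: card_lt sum.distrib)
  finally show "card {u. u < t \<and> wt u = 0} + q = t" using c1 c2 q2 by simp
qed

lemma pg_sub: "pg_point q \<alpha> v \<subseteq> LL \<longleftrightarrow> \<alpha>^v \<in> LL"
proof
  assume "pg_point q \<alpha> v \<subseteq> LL"
  moreover have "\<alpha>^v \<in> pg_point q \<alpha> v" unfolding pg_point_def by (force intro!: exI[of _ 1])
  ultimately show "\<alpha>^v \<in> LL" by blast
next
  assume "\<alpha>^v \<in> LL"
  thus "pg_point q \<alpha> v \<subseteq> LL" using span2_cone[of x y] unfolding pg_point_def cone_def by auto
qed

lemma orbit_set: assumes "u < t" shows "{v. v < N \<and> v mod t = u} = {u, u+t, u+2*t}"
proof
  show "{v. v < N \<and> v mod t = u} \<subseteq> {u, u+t, u+2*t}"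
  proof
    fix v assume "v \<in> {v. v < N \<and> v mod t = u}"
    hence v: "v < 3*t" "v mod t = u" using N_eq by auto
    define k where "k = v div t"
    have vk: "v = t * k + u" using v(2) unfolding k_def by (metis mult_div_mod_eq)
    have "k < 3" using v(1) vk by (metis add_lessD1 mult.commute mult_less_cancel2)
    hence "k = 0 \<or> k = 1 \<or> k = 2" by linarith
    thus "v \<in> {u, u+t, u+2*t}" using vk by (auto simp: mult.commute)
  qed
next
  have "(u + t) mod t = u" "(u + 2*t) mod t = u" "u mod t = u" using assms by simp_all
  moreover have "u + 2*t < N" using assms N_eq by simp
  ultimately show "{u, u+t, u+2*t} \<subseteq> {v. v < N \<and> v mod t = u}" by auto
qed

lemma ow: assumes "u < t" shows "orbit_weight q \<alpha> LL t u = wt u"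
proof -
  have inj: "inj_on (pg_point q \<alpha>) {..<N}"
  proof (rule inj_onI)
    fix v w assume vw: "v \<in> {..<N}" "w \<in> {..<N}" "pg_point q \<alpha> v = pg_point q \<alpha> w"
    have "\<alpha>^v \<in> pg_point q \<alpha> v" unfolding pg_point_def by (force intro!: exI[of _ 1])
    hence "\<alpha>^v \<in> pg_point q \<alpha> w" using vw(3) by simp
    then obtain c where c: "c \<in> K" "\<alpha>^v = c * \<alpha>^w" unfolding pg_point_def by blast
    hence "c \<noteq> 0" by (metis alpha_pow_nz mult_zero_left)
    thus "v = w" using decomp_unique[of 1 c v w] c vw by simp
  qed
  have inner: "{v. v < q^2+q+1 \<and> v mod t = u mod t \<and> pg_point q \<alpha> v \<subseteq> LL} = {v\<in>{u, u+t, u+2*t}. v \<in> SS}"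
  proof -
    have "\<forall>v. (v < q^2+q+1 \<and> v mod t = u mod t \<and> pg_point q \<alpha> v \<subseteq> LL) \<longleftrightarrow>
        (v \<in> {v. v < N \<and> v mod t = u} \<and> v \<in> SS)" using assms by (auto simp: pg_sub idx_def N_def)
    thus ?thesis unfolding orbit_set[OF assms] by blast
  qed
  have sub: "{v\<in>{u, u+t, u+2*t}. v \<in> SS} \<subseteq> {..<N}" using idx_sub by blast
  have "orbit_weight q \<alpha> LL t u = card (pg_point q \<alpha> ` {v\<in>{u, u+t, u+2*t}. v \<in> SS})"
    unfolding orbit_weight_def setcompr_eq_image inner ..
  also have "\<dots> = card {v\<in>{u, u+t, u+2*t}. v \<in> SS}" by (rule card_image[OF inj_on_subset[OF inj sub]])
  also have "\<dots> = (\<Sum>v\<in>{u, u+t, u+2*t}. ind (v \<in> SS))" by (rule card_ind) simp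
  also have "\<dots> = wt u" unfolding wt_def using t_pos by simp
  finally show ?thesis .
qed

end

end

theorem proposition9:
  fixes p h q :: nat and \<alpha> :: "'a::{field,finite}" and L :: "'a set" and t :: nat
  assumes "prime p" and "h \<ge> 1" and "q = p ^ h"
    and "card (UNIV :: 'a set) = q ^ 3"
    and "primitive_elem \<alpha>"
    and "pg_line q L"
    and "tau_fixed p q \<alpha> L"
    and "3 dvd (q^2 + q + 1)"
    and "t = (q^2 + q + 1) div 3"
  shows "(\<forall>u < t. orbit_weight q \<alpha> L t u \<le> 2)
       \<and> 3 * int (card {u. u < t \<and> orbit_weight q \<alpha> L t u = 0}) = int q ^ 2 - 2 * int q + 1
       \<and> card {u. u < t \<and> orbit_weight q \<alpha> L t u = 1} = q - 1
       \<and> card {u. u < t \<and> orbit_weight q \<alpha> L t u = 2} = 1"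
proof -
  have p2: "p \<ge> 2" using assms(1) prime_ge_2_nat by blast
  have "p \<le> p ^ h" using assms(2) p2 by (simp add: self_le_power)
  hence q2: "q \<ge> 2" using p2 assms(3) by simp
  have fin: "finite (UNIV :: 'a set)" by simp
  have cpos: "CHAR('a) > 0" using finite_imp_CHAR_pos[OF fin] .
  have cprime: "prime CHAR('a)" using prime_CHAR_semidom[OF cpos] .
  have "CHAR('a) dvd card (UNIV :: 'a set)" by (rule CHAR_dvd_CARD)
  hence "CHAR('a) dvd p ^ (h * 3)" using assms(3,4) by (simp add: power_mult)
  hence "CHAR('a) dvd p" using cprime prime_dvd_power by blast
  hence cp: "CHAR('a) = p" using cprime assms(1) primes_dvd_imp_eq by blast
  have frob: "(x+y)^q = x^q + y^q" for x y :: 'a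
    by (rule freshmans_dream') (use cprime cp assms(3) in auto)
  have E: "ffs q \<alpha>"
  proof
    show "q \<ge> 2" by (rule q2)
    show "card (UNIV::'a set) = q^3" by (rule assms(4))
    show "(x+y)^q = x^q + y^q" for x y :: 'a by (rule frob)
    show "primitive_elem \<alpha>" by (rule assms(5))
  qed
  interpret E: ffs q \<alpha> by (rule E)
  interpret F: ffs3 q \<alpha>
  proof (rule ffs3.intro[OF E], unfold_locales)
    show "3 dvd E.N" unfolding E.N_def by (rule assms(8))
  qed
  obtain x y where L: "L = E.span2 x y" and ind: "E.indep2 x y" using assms(6) E.line_iff by blast
  have tt: "t = F.t" using assms(9) by (simp add: F.t_def E.N_def)
  have ow: "\<And>u. u < t \<Longrightarrow> orbit_weight q \<alpha> L t u = F.wt x y u"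
    using F.ow[OF ind] L tt by simp
  have sets: "\<And>j. {u. u < t \<and> orbit_weight q \<alpha> L t u = j} = {u. u < F.t \<and> F.wt x y u = j}"
    using ow tt by auto
  have c: "card {u. u < F.t \<and> F.wt x y u = 2} = 1"
          "card {u. u < F.t \<and> F.wt x y u = 1} = q - 1"
          "card {u. u < F.t \<and> F.wt x y u = 0} + q = F.t"
    using F.counts[OF ind] by auto
  have N3: "3 * F.t = q^2 + q + 1" using F.N_eq by (simp add: E.N_def)
  have "3 * int (card {u. u < F.t \<and> F.wt x y u = 0}) = int q ^ 2 - 2 * int q + 1"
  proof -
    have "3 * int (card {u. u < F.t \<and> F.wt x y u = 0}) + 3 * int q = int (3 * F.t)"
      using c(3) by (simp flip: of_nat_add of_nat_mult)
    also have "\<dots> = int q ^ 2 + int q + 1" unfolding N3 by simp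
    finally show ?thesis by simp
  qed
  moreover have "\<forall>u < t. orbit_weight q \<alpha> L t u \<le> 2" using ow F.wt_le[OF ind] tt by simp
  ultimately show ?thesis unfolding sets using c by simp
qed
end
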